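(* Let $f:[x_i,\infty)\to\mathbb{R}^+$ be a probability density function such that $f(x)\sim Cx^{-\eta}$ as $x\to\infty$, for some $\eta>1$ and $C>0$, and set $\alpha_c=2+\frac1{\eta-1}>2$. Then for every $\alpha\in(2,\alpha_c)$ the transformed density $\mathcal{U}_\alpha[f]$ has unbounded support and $$\mathcal{U}_\alpha[f](u)\sim |K_1u|^{\frac{1}{\eta(\alpha-2)+1-\alpha}}\quad\text{as }u\to-\infty,$$ for some $K_1>0$. When $\alpha=\alpha_c$, $\mathcal{U}_{\alpha_c}[f]$ has an exponential decay, while for $\alpha<2$ or $\alpha>\alpha_c$ the support of $\mathcal{U}_\alpha[f]$ is compact. Finally, $\mathcal{U}_\alpha[f]$ tends to the uniform density as $\alpha\to\infty$.
   Context: Up transform: for a probability density $f$ on $[x_i,\infty)$ and $\alpha\neq2$, $\mathcal{U}_\alpha[f](u)=|(\alpha-2)x(u)|^{1/(2-\alpha)}$, where $x(u)$ is the inverse of the change of variable $u(x)=-\int_{x_i}^{x}|(\alpha-2)v|^{1/(\alpha-2)}f(v)\,dv$ (so $u'(x)=-|(\alpha-2)x|^{1/(\alpha-2)}f(x)$; the change of variable is defined up to an additive constant). *)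

theory Defs
  imports "HOL-Analysis.Analysis" "HOL-Library.Landau_Symbols"
begin

text \<open>Change of variable of the Up transform, normalised so that u(x_i) = 0:
  u(x) = - integral over [x_i, x] of |(alpha-2) v| powr (1/(alpha-2)) * f v.\<close>
definition up_var :: "real \<Rightarrow> real \<Rightarrow> (real \<Rightarrow> real) \<Rightarrow> real \<Rightarrow> real" where
  "up_var \<alpha> xi f x = - integral {xi..x} (\<lambda>v. \<bar>(\<alpha> - 2) * v\<bar> powr (1 / (\<alpha> - 2)) * f v)"

definition up_inv :: "real \<Rightarrow> real \<Rightarrow> (real \<Rightarrow> real) \<Rightarrow> real \<Rightarrow> real" where
  "up_inv \<alpha> xi f u = (THE x. xi \<le> x \<and> up_var \<alpha> xi f x = u)"

definition Up :: "real \<Rightarrow> real \<Rightarrow> (real \<Rightarrow> real) \<Rightarrow> real \<Rightarrow> real" where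
  "Up \<alpha> xi f u =
     (if u \<in> up_var \<alpha> xi f ` {xi..}
      then \<bar>(\<alpha> - 2) * up_inv \<alpha> xi f u\<bar> powr (1 / (2 - \<alpha>)) else 0)"

end

theory Submission
  imports Defs
begin


lemma integral_pos_lemma:
  fixes g :: "real \<Rightarrow> real"
  assumes gi: "g absolutely_integrable_on {a..b}" and ab: "a < b"
    and pos: "\<And>x. x \<in> {a..b} \<Longrightarrow> 0 < g x"
  shows "0 < integral {a..b} g"
proof -
  have gi': "g integrable_on {a..b}"
    using gi set_lebesgue_integral_eq_integral(1) by blast
  have ge: "0 \<le> integral {a..b} g"
    using gi' pos by (intro integral_nonneg) (auto simp: less_imp_le)
  moreover have "integral {a..b} g \<noteq> 0"
  proof
    assume 0: "integral {a..b} g = 0"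
    have "(LINT x:{a..b}|lebesgue. g x) = 0"
      using set_lebesgue_integral_eq_integral(2)[OF gi] 0 by simp
    then have i0: "integral\<^sup>L lebesgue (\<lambda>x. indicator {a..b} x *\<^sub>R g x) = 0"
      by (simp add: set_lebesgue_integral_def)
    have int: "integrable lebesgue (\<lambda>x. indicator {a..b} x *\<^sub>R g x)"
      using gi by (simp add: set_integrable_def)
    have "AE x in lebesgue. indicator {a..b} x *\<^sub>R g x = 0"
      using integral_nonneg_eq_0_iff_AE[OF int] i0 pos
      by (auto simp: indicator_def less_imp_le)
    moreover have pos': "\<And>x. a \<le> x \<Longrightarrow> x \<le> b \<Longrightarrow> g x \<noteq> 0"
      using pos by (metis atLeastAtMost_iff less_irrefl)
    have "{x \<in> space lebesgue. \<not> (indicator {a..b} x *\<^sub>R g x = 0)} = {a..b}"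
      using pos' by (auto simp: indicator_def)
    ultimately have "emeasure lebesgue {a..b} = 0"
      using AE_iff_measurable[of "{a..b}" lebesgue] by auto
    then show False using ab by simp
  qed
  ultimately show ?thesis by simp
qed

lemma integral_mono_upper:
  fixes g :: "real \<Rightarrow> real"
  assumes "a \<le> x" "x \<le> y" "g integrable_on {a..y}" "\<And>v. x \<le> v \<Longrightarrow> v \<le> y \<Longrightarrow> 0 \<le> g v"
  shows "integral {a..x} g \<le> integral {a..y} g"
proof -
  have "integral {a..x} g + integral {x..y} g = integral {a..y} g"
    using Henstock_Kurzweil_Integration.integral_combine[OF assms(1) assms(2) assms(3)] by auto
  moreover have "0 \<le> integral {x..y} g"
    using assms by (intro integral_nonneg integrable_on_subinterval[OF assms(3)]) auto
  ultimately show ?thesis by linarith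
qed

lemma integral_ratio_tendsto:
  fixes g h H :: "real \<Rightarrow> real"
  assumes gi: "\<And>x. x \<ge> a \<Longrightarrow> g integrable_on {a..x}"
    and gh: "g \<sim>[at_top] h" and hpos: "eventually (\<lambda>v. h v > 0) at_top"
    and hH: "\<And>x y. b \<le> x \<Longrightarrow> x \<le> y \<Longrightarrow> (h has_integral (H y - H x)) {x..y}"
    and Htop: "filterlim H at_top at_top"
  shows "((\<lambda>x. integral {a..x} g / H x) \<longlongrightarrow> 1) at_top"
proof -
  have rat: "((\<lambda>v. g v / h v) \<longlongrightarrow> 1) at_top"
    using asymp_equivD_strong[OF gh eventually_mono[OF hpos]] by auto
  have close: "eventually (\<lambda>v. \<bar>g v - h v\<bar> \<le> \<epsilon> * h v) at_top" if "\<epsilon> > 0" for \<epsilon>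
  proof -
    have "eventually (\<lambda>v. dist (g v / h v) 1 < \<epsilon>) at_top" using tendstoD[OF rat that] .
    then show ?thesis using hpos
    proof eventually_elim
      case (elim v)
      then have "\<bar>g v / h v - 1\<bar> < \<epsilon>" by (simp add: dist_real_def)
      moreover have "g v / h v - 1 = (g v - h v) / h v" using elim by (simp add: field_simps)
      ultimately have "\<bar>g v - h v\<bar> / h v < \<epsilon>" using elim by (simp add: abs_divide)
      then show ?case using elim by (simp add: pos_divide_less_eq)
    qed
  qed
  show ?thesis
  proof (rule tendstoI)
    fix e :: real assume e: "e > 0"
    define \<epsilon> where "\<epsilon> = e/2"
    have \<epsilon>: "\<epsilon> > 0" using e by (simp add: \<epsilon>_def)
    obtain V0 where V0: "\<And>v. v \<ge> V0 \<Longrightarrow> \<bar>g v - h v\<bar> \<le> \<epsilon> * h v \<and> h v > 0"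
      using eventually_conj[OF close[OF \<epsilon>] hpos] by (auto simp: eventually_at_top_linorder)
    define V where "V = max V0 (max a b)"
    define K where "K = \<bar>integral {a..V} g - H V\<bar> + \<epsilon> * \<bar>H V\<bar>"
    have K0: "K \<ge> 0" using \<epsilon> by (simp add: K_def)
    have main: "\<bar>integral {a..x} g - H x\<bar> \<le> K + \<epsilon> * H x" if x: "x \<ge> V" for x
    proof -
      have gx: "g integrable_on {a..x}" using gi[of x] x by (auto simp: V_def)
      have gV: "g integrable_on {V..x}"
        by (rule integrable_on_subinterval[OF gx]) (auto simp: V_def)
      have hV: "(h has_integral (H x - H V)) {V..x}" using hH x by (auto simp: V_def)
      have "a \<le> V" "V \<le> x" using x by (auto simp: V_def)
      then have split: "integral {a..x} g = integral {a..V} g + integral {V..x} g"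
        using Henstock_Kurzweil_Integration.integral_combine[OF _ _ gx] by simp
      have hi: "h integrable_on {V..x}" using hV by blast
      have b1: "norm (integral {V..x} (\<lambda>v. g v - h v)) \<le> integral {V..x} (\<lambda>v. \<epsilon> * h v)"
        apply (rule integral_norm_bound_integral)
        using gV hi integrable_on_cmult_left[OF hi, of \<epsilon>] apply (auto intro: integrable_diff)
        using V0 by (auto simp: V_def)
      have e1: "integral {V..x} (\<lambda>v. g v - h v) = integral {V..x} g - (H x - H V)"
        using integral_diff[OF gV hi] integral_unique[OF hV] by simp
      have e2: "integral {V..x} (\<lambda>v. \<epsilon> * h v) = \<epsilon> * (H x - H V)"
        using integral_unique[OF hV] by simp
      have "\<bar>integral {V..x} g - (H x - H V)\<bar> \<le> \<epsilon> * (H x - H V)"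
        using b1 e1 e2 integral_unique[OF hV] by auto
      then have "\<bar>integral {a..x} g - H x\<bar> \<le> \<bar>integral {a..V} g - H V\<bar> + \<epsilon> * (H x - H V)"
        using split by linarith
      also have "\<dots> \<le> K + \<epsilon> * H x"
        using \<epsilon> by (simp add: K_def right_diff_distrib) (smt (verit) abs_ge_minus_self mult_minus_right mult_left_mono less_imp_le)
      finally show ?thesis .
    qed
    have ev: "eventually (\<lambda>x. H x \<ge> 2 * K / e + 1) at_top"
      using Htop by (simp add: filterlim_at_top)
    then have ev2: "eventually (\<lambda>x. H x \<ge> 2 * K / e + 1 \<and> x \<ge> V) at_top"
      by (intro eventually_conj) (auto simp: eventually_ge_at_top)
    show "eventually (\<lambda>x. dist (integral {a..x} g / H x) 1 < e) at_top"
      using ev2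
    proof eventually_elim
      case (elim x)
      have Hp: "H x > 0" using elim K0 e by (smt (verit) divide_nonneg_pos)
      have "K < e/2 * H x"
      proof -
        have "2 * K / e < H x" using elim by linarith
        then have "2 * K < H x * e" using e by (simp add: divide_less_eq)
        then show ?thesis by (simp add: field_simps)
      qed
      then have "\<bar>integral {a..x} g - H x\<bar> < e * H x"
        using main[of x] elim by (simp add: \<epsilon>_def)
      moreover have "integral {a..x} g / H x - 1 = (integral {a..x} g - H x) / H x"
        using Hp by (simp add: field_simps)
      ultimately show ?case using Hp
        by (simp add: dist_real_def abs_divide pos_divide_less_eq)
    qed
  qed
qed

lemma integral_bounded_lemma:
  fixes g h H :: "real \<Rightarrow> real"
  assumes gi: "\<And>x. x \<ge> a \<Longrightarrow> g integrable_on {a..x}"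
    and gnn: "\<And>x. x \<ge> a \<Longrightarrow> 0 \<le> g x"
    and gh: "g \<sim>[at_top] h" and hpos: "eventually (\<lambda>v. h v > 0) at_top"
    and hH: "\<And>x y. b \<le> x \<Longrightarrow> x \<le> y \<Longrightarrow> (h has_integral (H y - H x)) {x..y}"
    and Hle: "\<And>x. x \<ge> b \<Longrightarrow> H x \<le> M"
  shows "\<exists>B. \<forall>x\<ge>a. integral {a..x} g \<le> B"
proof -
  have rat: "((\<lambda>v. g v / h v) \<longlongrightarrow> 1) at_top"
    using asymp_equivD_strong[OF gh eventually_mono[OF hpos]] by auto
  have "eventually (\<lambda>v. g v / h v < 2) at_top"
    using order_tendstoD(2)[OF rat] by simp
  then have "eventually (\<lambda>v. g v \<le> 2 * h v) at_top" using hpos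
    by eventually_elim (simp add: pos_divide_less_eq)
  then obtain V0 where V0: "\<And>v. v \<ge> V0 \<Longrightarrow> g v \<le> 2 * h v"
    by (auto simp: eventually_at_top_linorder)
  define V where "V = max V0 (max a b)"
  have gVV: "g integrable_on {a..V}" using gi by (simp add: V_def)
  have "integral {a..x} g \<le> integral {a..V} g + 2 * (M - H V)" if x: "x \<ge> a" for x
  proof (cases "x \<le> V")
    case True
    then have "integral {a..x} g \<le> integral {a..V} g"
      using x gVV gnn by (intro integral_mono_upper) auto
    moreover have "H V \<le> M" using Hle by (simp add: V_def)
    ultimately show ?thesis by (smt (verit))
  next
    case False
    have gx: "g integrable_on {a..x}" using gi[of x] x by auto
    have gV: "g integrable_on {V..x}"
      by (rule integrable_on_subinterval[OF gx]) (auto simp: V_def)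
    have "b \<le> V" "V \<le> x" using False by (auto simp: V_def)
    then have hV: "(h has_integral (H x - H V)) {V..x}" using hH by blast
    have "a \<le> V" using False by (auto simp: V_def)
    then have split: "integral {a..x} g = integral {a..V} g + integral {V..x} g"
      using Henstock_Kurzweil_Integration.integral_combine[OF _ _ gx] \<open>V \<le> x\<close> by simp
    have "integral {V..x} g \<le> integral {V..x} (\<lambda>v. 2 * h v)"
      using gV hV V0 integrable_on_cmult_left[OF has_integral_integrable[OF hV], of 2] by (intro integral_le) (auto simp: V_def)
    also have "\<dots> = 2 * (H x - H V)" using integral_unique[OF hV] by simp
    also have "\<dots> \<le> 2 * (M - H V)" using Hle[of x] False by (simp add: V_def)
    finally show ?thesis using split by linarith
  qed
  then show ?thesis by blast
qed

lemma powr_antideriv: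
  fixes c \<beta> :: real assumes "\<beta> \<noteq> -1" "0 < x" "x \<le> y"
  shows "((\<lambda>v. c * v powr \<beta>) has_integral
           (c/(\<beta>+1) * y powr (\<beta>+1) - c/(\<beta>+1) * x powr (\<beta>+1))) {x..y}"
proof -
  have "((\<lambda>v. c/(\<beta>+1) * v powr (\<beta>+1)) has_real_derivative c * v powr \<beta>) (at v within {x..y})"
    if "v \<in> {x..y}" for v
  proof -
    have v: "v > 0" using that assms by auto
    have b1: "\<beta> + 1 \<noteq> 0" using assms by linarith
    have "((\<lambda>v. c/(\<beta>+1) * v powr (\<beta>+1)) has_real_derivative c/(\<beta>+1) * ((\<beta>+1) * v powr (\<beta>+1-1))) (at v)"
      by (intro DERIV_cmult has_real_derivative_powr v)
    moreover have "c/(\<beta>+1) * ((\<beta>+1) * v powr (\<beta>+1-1)) = c * v powr \<beta>" using b1 by simp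
    ultimately show ?thesis by (metis has_field_derivative_at_within)
  qed
  then show ?thesis using assms
    by (intro fundamental_theorem_of_calculus)
       (auto simp: has_real_derivative_iff_has_vector_derivative[symmetric])
qed

lemma ln_antideriv:
  fixes c :: real assumes "0 < x" "x \<le> y"
  shows "((\<lambda>v. c * v powr (-1)) has_integral (c * ln y - c * ln x)) {x..y}"
proof -
  have "((\<lambda>v. c * ln v) has_real_derivative c * v powr (-1)) (at v within {x..y})"
    if "v \<in> {x..y}" for v
  proof -
    have v: "v > 0" using that assms by auto
    then show ?thesis
      by (auto intro!: derivative_eq_intros simp: powr_neg_one)
  qed
  then show ?thesis using assms
    by (intro fundamental_theorem_of_calculus)
       (auto simp: has_real_derivative_iff_has_vector_derivative[symmetric])
qed

lemma powr_at_top: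
  fixes k p :: real assumes "k > 0" "p > 0"
  shows "filterlim (\<lambda>x. k * x powr p) at_top at_top"
proof -
  have "filterlim (\<lambda>x. exp (p * ln x)) at_top at_top"
    by (rule filterlim_compose[OF exp_at_top filterlim_tendsto_pos_mult_at_top[OF tendsto_const assms(2) ln_at_top]])
  then have "filterlim (\<lambda>x. x powr p) at_top at_top"
    by (rule filterlim_cong[THEN iffD1, rotated 3])
       (auto simp: powr_def eventually_at_top_dense intro!: exI[of _ 0])
  then show ?thesis
    by (rule filterlim_tendsto_pos_mult_at_top[OF tendsto_const assms(1)])
qed




definition wt :: "real \<Rightarrow> real \<Rightarrow> real" where
  "wt \<alpha> v = \<bar>(\<alpha> - 2) * v\<bar> powr (1 / (\<alpha> - 2))"

locale upsetup =
  fixes f :: "real \<Rightarrow> real" and xi :: real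
  assumes xi_pos: "0 < xi" and f_pos: "\<And>x. xi \<le> x \<Longrightarrow> 0 < f x"
    and f_int: "f integrable_on {xi..}"
begin

definition G :: "real \<Rightarrow> real \<Rightarrow> real" where
  "G \<alpha> x = integral {xi..x} (\<lambda>v. wt \<alpha> v * f v)"

lemma up_var_G: "up_var \<alpha> xi f x = - G \<alpha> x"
  by (simp add: up_var_def G_def wt_def)

lemma f_int_ivl: "f integrable_on {xi..x}"
  by (rule integrable_on_subinterval[OF f_int]) auto

lemma f_abs: "f absolutely_integrable_on {xi..x}"
  using f_int_ivl f_pos by (intro nonnegative_absolutely_integrable_1) (auto simp: less_imp_le)

lemma wt_pos: "\<alpha> \<noteq> 2 \<Longrightarrow> 0 < v \<Longrightarrow> 0 < wt \<alpha> v"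
  by (simp add: wt_def)

lemma wt_cont: "\<alpha> \<noteq> 2 \<Longrightarrow> continuous_on {xi..x} (wt \<alpha>)"
proof -
  assume a: "\<alpha> \<noteq> 2"
  have "continuous_on {xi..x} (\<lambda>v. \<bar>(\<alpha> - 2) * v\<bar> powr (1 / (\<alpha> - 2)))"
    using a xi_pos by (intro continuous_intros) auto
  then show ?thesis by (simp add: wt_def[abs_def])
qed

lemma g_abs: "\<alpha> \<noteq> 2 \<Longrightarrow> (\<lambda>v. wt \<alpha> v * f v) absolutely_integrable_on {xi..x}"
proof -
  assume a: "\<alpha> \<noteq> 2"
  show ?thesis
  proof (rule absolutely_integrable_bounded_measurable_product_real)
    show "wt \<alpha> \<in> borel_measurable (lebesgue_on {xi..x})"
      using wt_cont[OF a] by (intro continuous_imp_measurable_on_sets_lebesgue) auto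
    show "bounded (wt \<alpha> ` {xi..x})"
      using wt_cont[OF a] by (intro compact_imp_bounded compact_continuous_image) auto
  qed (auto simp: f_abs)
qed

lemma g_int: "\<alpha> \<noteq> 2 \<Longrightarrow> (\<lambda>v. wt \<alpha> v * f v) integrable_on {xi..x}"
  using g_abs set_lebesgue_integral_eq_integral(1) by blast

lemma g_pos: "\<alpha> \<noteq> 2 \<Longrightarrow> xi \<le> v \<Longrightarrow> 0 < wt \<alpha> v * f v"
  using wt_pos f_pos xi_pos by simp

lemma G_xi: "G \<alpha> xi = 0"
  by (simp add: G_def)

lemma G_strict: assumes "\<alpha> \<noteq> 2" "xi \<le> a" "a < b" shows "G \<alpha> a < G \<alpha> b"
proof -
  have "integral {xi..a} (\<lambda>v. wt \<alpha> v * f v) + integral {a..b} (\<lambda>v. wt \<alpha> v * f v)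
        = integral {xi..b} (\<lambda>v. wt \<alpha> v * f v)"
    using assms by (intro Henstock_Kurzweil_Integration.integral_combine g_int) auto
  moreover have "0 < integral {a..b} (\<lambda>v. wt \<alpha> v * f v)"
  proof (rule integral_pos_lemma)
    show "(\<lambda>v. wt \<alpha> v * f v) absolutely_integrable_on {a..b}"
      using assms g_pos
      by (intro nonnegative_absolutely_integrable_1 integrable_on_subinterval[OF g_int[OF assms(1), of b]])
         (auto simp: less_imp_le)
  qed (use assms g_pos in auto)
  ultimately show ?thesis by (simp add: G_def)
qed

lemma G_mono: "\<alpha> \<noteq> 2 \<Longrightarrow> xi \<le> a \<Longrightarrow> a \<le> b \<Longrightarrow> G \<alpha> a \<le> G \<alpha> b"
  using G_strict by (cases "a = b") (auto simp: less_le)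

lemma G_nonneg: "\<alpha> \<noteq> 2 \<Longrightarrow> xi \<le> x \<Longrightarrow> 0 \<le> G \<alpha> x"
  using G_mono[of \<alpha> xi x] by (simp add: G_xi)

lemma G_cont: "\<alpha> \<noteq> 2 \<Longrightarrow> continuous_on {xi..b} (G \<alpha>)"
  unfolding G_def[abs_def] by (intro indefinite_integral_continuous_1 g_int)

lemma G_IVT: assumes "\<alpha> \<noteq> 2" "0 \<le> y" "xi \<le> X" "y \<le> G \<alpha> X"
  shows "\<exists>x. xi \<le> x \<and> x \<le> X \<and> G \<alpha> x = y"
  using IVT'[of "G \<alpha>" xi y X] assms G_cont[OF assms(1)] by (auto simp: G_xi)

lemma up_inv_G: assumes "\<alpha> \<noteq> 2" "xi \<le> x" shows "up_inv \<alpha> xi f (- G \<alpha> x) = x"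
  unfolding up_inv_def up_var_G
proof (rule the_equality)
  fix y assume y: "xi \<le> y \<and> - G \<alpha> y = - G \<alpha> x"
  show "y = x"
  proof (rule ccontr)
    assume "y \<noteq> x"
    then have "y < x \<or> x < y" by auto
    then show False using G_strict[OF assms(1)] y assms by force
  qed
qed (use assms in auto)

lemma Up_G: assumes "\<alpha> \<noteq> 2" "xi \<le> x"
  shows "Up \<alpha> xi f (- G \<alpha> x) = \<bar>(\<alpha> - 2) * x\<bar> powr (1 / (2 - \<alpha>))"
  using assms up_inv_G[OF assms] by (auto simp: Up_def up_var_G)

lemma Up_out: assumes "\<not> (\<exists>x\<ge>xi. u = - G \<alpha> x)" shows "Up \<alpha> xi f u = 0"
  using assms by (auto simp: Up_def up_var_G)

lemma Up_nz_iff: assumes "\<alpha> \<noteq> 2"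
  shows "Up \<alpha> xi f u \<noteq> 0 \<longleftrightarrow> (\<exists>x\<ge>xi. u = - G \<alpha> x)"
proof
  assume "Up \<alpha> xi f u \<noteq> 0" then show "\<exists>x\<ge>xi. u = - G \<alpha> x" using Up_out by blast
next
  assume "\<exists>x\<ge>xi. u = - G \<alpha> x"
  then obtain x where "x \<ge> xi" "u = - G \<alpha> x" by blast
  then show "Up \<alpha> xi f u \<noteq> 0" using Up_G[OF assms] assms xi_pos by simp
qed

end




lemma ratio_top:
  fixes F H :: "real \<Rightarrow> real"
  assumes "((\<lambda>x. F x / H x) \<longlongrightarrow> 1) at_top" "filterlim H at_top at_top"
  shows "filterlim F at_top at_top"
proof -
  have L: "filterlim (\<lambda>x. F x / H x * H x) at_top at_top"
    by (rule filterlim_tendsto_pos_mult_at_top[OF assms(1) _ assms(2)]) simp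
  have ev: "eventually (\<lambda>x. F x / H x * H x = F x) at_top"
    using assms(2) unfolding filterlim_at_top_dense
    by (auto elim!: eventually_mono[OF _ ] dest: spec[of _ 0])
  show ?thesis using filterlim_cong[OF refl refl ev] L by simp
qed

context upsetup begin

lemma g_equiv:
  assumes a: "\<alpha> \<noteq> 2" and tail: "f \<sim>[at_top] (\<lambda>x. C * x powr (- \<eta>))"
  shows "(\<lambda>v. wt \<alpha> v * f v) \<sim>[at_top]
           (\<lambda>v. (C * \<bar>\<alpha> - 2\<bar> powr (1/(\<alpha>-2))) * v powr (1/(\<alpha>-2) - \<eta>))"
proof -
  have A: "(\<lambda>v. wt \<alpha> v * f v) \<sim>[at_top]
          (\<lambda>v. (\<bar>\<alpha> - 2\<bar> powr (1/(\<alpha>-2)) * v powr (1/(\<alpha>-2))) * (C * v powr (- \<eta>)))"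
  proof (rule asymp_equiv_mult[OF _ tail])
    show "wt \<alpha> \<sim>[at_top] (\<lambda>v. \<bar>\<alpha> - 2\<bar> powr (1/(\<alpha>-2)) * v powr (1/(\<alpha>-2)))"
      by (rule asymp_equiv_refl_ev)
         (auto simp: wt_def eventually_at_top_linorder abs_mult powr_mult intro!: exI[of _ 1])
  qed
  have ev: "eventually (\<lambda>v. (\<bar>\<alpha> - 2\<bar> powr (1/(\<alpha>-2)) * v powr (1/(\<alpha>-2))) * (C * v powr (- \<eta>))
       = (C * \<bar>\<alpha> - 2\<bar> powr (1/(\<alpha>-2))) * v powr (1/(\<alpha>-2) - \<eta>)) at_top"
  proof -
    have "v powr (1/(\<alpha>-2) - \<eta>) = v powr (1/(\<alpha>-2)) * v powr (- \<eta>)" for v :: real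
      by (simp add: powr_add[symmetric])
    then show ?thesis by (auto simp: eventually_at_top_linorder)
  qed
  show ?thesis
    by (rule asymp_equiv_transfer[OF A _ ev]) (rule always_eventually, simp)
qed

lemma G_case_pos:
  assumes a: "\<alpha> \<noteq> 2" and tail: "f \<sim>[at_top] (\<lambda>x. C * x powr (- \<eta>))" and C: "C > 0"
    and b: "1/(\<alpha>-2) - \<eta> > -1"
  defines "c \<equiv> C * \<bar>\<alpha> - 2\<bar> powr (1/(\<alpha>-2))" and "p \<equiv> 1/(\<alpha>-2) - \<eta> + 1"
  shows "((\<lambda>x. G \<alpha> x / (c/p * x powr p)) \<longlongrightarrow> 1) at_top"
proof -
  have c: "c > 0" using C a by (simp add: c_def)
  have p: "p > 0" using b by (simp add: p_def)
  show ?thesis unfolding G_def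
  proof (rule integral_ratio_tendsto[where b=1])
    show "(\<lambda>v. wt \<alpha> v * f v) \<sim>[at_top] (\<lambda>v. c * v powr (1/(\<alpha>-2) - \<eta>))"
      using g_equiv[OF a tail] by (simp add: c_def)
    show "eventually (\<lambda>v. c * v powr (1/(\<alpha>-2) - \<eta>) > 0) at_top"
      using c by (auto simp: eventually_at_top_linorder intro!: exI[of _ 1])
    show "((\<lambda>v. c * v powr (1/(\<alpha>-2) - \<eta>)) has_integral (c/p * y powr p - c/p * x powr p)) {x..y}"
      if "1 \<le> x" "x \<le> y" for x y
      using powr_antideriv[of "1/(\<alpha>-2) - \<eta>" x y c] that b by (simp add: p_def)
    show "filterlim (\<lambda>x. c/p * x powr p) at_top at_top"
      using c p by (intro powr_at_top) auto
  qed (use g_int a in auto)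
qed

lemma G_case_zero:
  assumes a: "\<alpha> \<noteq> 2" and tail: "f \<sim>[at_top] (\<lambda>x. C * x powr (- \<eta>))" and C: "C > 0"
    and b: "1/(\<alpha>-2) - \<eta> = -1"
  defines "c \<equiv> C * \<bar>\<alpha> - 2\<bar> powr (1/(\<alpha>-2))"
  shows "((\<lambda>x. G \<alpha> x / (c * ln x)) \<longlongrightarrow> 1) at_top"
proof -
  have c: "c > 0" using C a by (simp add: c_def)
  show ?thesis unfolding G_def
  proof (rule integral_ratio_tendsto[where b=1])
    show "(\<lambda>v. wt \<alpha> v * f v) \<sim>[at_top] (\<lambda>v. c * v powr (-1))"
      using g_equiv[OF a tail] b by (simp add: c_def)
    show "eventually (\<lambda>v. c * v powr (-1) > 0) at_top"
      using c by (auto simp: eventually_at_top_linorder intro!: exI[of _ 1])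
    show "((\<lambda>v. c * v powr (-1)) has_integral (c * ln y - c * ln x)) {x..y}"
      if "1 \<le> x" "x \<le> y" for x y
      using ln_antideriv[of x y c] that by simp
    show "filterlim (\<lambda>x. c * ln x) at_top at_top"
      by (rule filterlim_tendsto_pos_mult_at_top[OF tendsto_const c ln_at_top])
  qed (use g_int a in auto)
qed

lemma G_case_neg:
  assumes a: "\<alpha> \<noteq> 2" and tail: "f \<sim>[at_top] (\<lambda>x. C * x powr (- \<eta>))" and C: "C > 0"
    and b: "1/(\<alpha>-2) - \<eta> < -1"
  shows "\<exists>B. \<forall>x\<ge>xi. G \<alpha> x \<le> B"
proof -
  define c where "c = C * \<bar>\<alpha> - 2\<bar> powr (1/(\<alpha>-2))"
  define p where "p = 1/(\<alpha>-2) - \<eta> + 1"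
  have c: "c > 0" using C a by (simp add: c_def)
  have p: "p < 0" using b by (simp add: p_def)
  show ?thesis unfolding G_def
  proof (rule integral_bounded_lemma[where b=1 and M=0])
    show "(\<lambda>v. wt \<alpha> v * f v) \<sim>[at_top] (\<lambda>v. c * v powr (1/(\<alpha>-2) - \<eta>))"
      using g_equiv[OF a tail] by (simp add: c_def)
    show "eventually (\<lambda>v. c * v powr (1/(\<alpha>-2) - \<eta>) > 0) at_top"
      using c by (auto simp: eventually_at_top_linorder intro!: exI[of _ 1])
    show "((\<lambda>v. c * v powr (1/(\<alpha>-2) - \<eta>)) has_integral ((\<lambda>x. c/p * x powr p) y - (\<lambda>x. c/p * x powr p) x)) {x..y}"
      if "1 \<le> x" "x \<le> y" for x y
      using powr_antideriv[of "1/(\<alpha>-2) - \<eta>" x y c] that b by (simp add: p_def)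
    show "c / p * x powr p \<le> 0" for x
      using c p by (simp add: divide_nonneg_neg mult_nonpos_nonneg)
  qed (use g_int g_pos a in \<open>auto simp: less_imp_le\<close>)
qed

definition Xi :: "real \<Rightarrow> real \<Rightarrow> real" where "Xi \<alpha> u = up_inv \<alpha> xi f u"

lemma range_all:
  assumes a: "\<alpha> \<noteq> 2" and top: "filterlim (G \<alpha>) at_top at_top" and u: "u \<le> 0"
  shows "\<exists>x\<ge>xi. u = - G \<alpha> x"
proof -
  obtain X where X: "\<And>x. x \<ge> X \<Longrightarrow> G \<alpha> x \<ge> -u"
    using top by (auto simp: filterlim_at_top eventually_at_top_linorder)
  have "\<exists>x. xi \<le> x \<and> x \<le> max X xi \<and> G \<alpha> x = -u"
    using u X[of "max X xi"] by (intro G_IVT a) auto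
  then show ?thesis by force
qed

lemma Xi_props:
  assumes a: "\<alpha> \<noteq> 2" and top: "filterlim (G \<alpha>) at_top at_top" and u: "u \<le> 0"
  shows "xi \<le> Xi \<alpha> u" "G \<alpha> (Xi \<alpha> u) = - u"
proof -
  obtain x where x: "x \<ge> xi" "u = - G \<alpha> x" using range_all[OF assms] by blast
  then have "Xi \<alpha> u = x" using up_inv_G[OF a x(1)] by (simp add: Xi_def)
  then show "xi \<le> Xi \<alpha> u" "G \<alpha> (Xi \<alpha> u) = - u" using x by auto
qed

lemma Xi_lim:
  assumes a: "\<alpha> \<noteq> 2" and top: "filterlim (G \<alpha>) at_top at_top"
  shows "filterlim (Xi \<alpha>) at_top at_bot"
  unfolding filterlim_at_top
proof
  fix Z :: real
  define Z' where "Z' = max Z xi"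
  have "eventually (\<lambda>u. u \<le> - G \<alpha> Z' - 1 \<and> u \<le> 0) at_bot"
    by (auto simp: eventually_at_bot_linorder intro!: exI[of _ "min 0 (- G \<alpha> Z' - 1)"])
  then show "eventually (\<lambda>u. Xi \<alpha> u \<ge> Z) at_bot"
  proof eventually_elim
    case (elim u)
    have "G \<alpha> (Xi \<alpha> u) = -u" "xi \<le> Xi \<alpha> u" using Xi_props[OF a top] elim by auto
    then have "\<not> Xi \<alpha> u \<le> Z'" using G_mono[OF a, of "Xi \<alpha> u" Z'] elim by auto
    then show ?case by (simp add: Z'_def)
  qed
qed

end




lemma pw_lim:
  fixes V :: real assumes V: "V > 0"
  shows "((\<lambda>a. ((a-2)*V) powr (1/(a-2))) \<longlongrightarrow> 1) at_top"
proof -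
  have y: "filterlim (\<lambda>a::real. a - 2) at_top at_top"
    unfolding filterlim_at_top
  proof
    fix Z :: real
    show "eventually (\<lambda>a. a - 2 \<ge> Z) at_top"
      using eventually_ge_at_top[of "Z+2"] by eventually_elim simp
  qed
  have l1: "((\<lambda>a::real. ln (a-2) / (a-2)) \<longlongrightarrow> 0) at_top"
    using filterlim_compose[OF ln_x_over_x_tendsto_0 y] by (simp add: o_def)
  have l2: "((\<lambda>a. ln V / (a-2)) \<longlongrightarrow> 0) at_top"
    by (rule tendsto_divide_0[OF tendsto_const filterlim_at_top_imp_at_infinity[OF y]])
  have "((\<lambda>a. exp (ln (a-2)/(a-2) + ln V/(a-2))) \<longlongrightarrow> exp (0+0)) at_top"
    by (intro tendsto_intros l1 l2)
  then have L: "((\<lambda>a. exp (ln (a-2)/(a-2) + ln V/(a-2))) \<longlongrightarrow> 1) at_top" by simp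
  have ev: "eventually (\<lambda>a. exp (ln (a-2)/(a-2) + ln V/(a-2)) = ((a-2)*V) powr (1/(a-2))) at_top"
    using eventually_gt_at_top[of 2]
  proof eventually_elim
    case (elim a)
    have "((a-2)*V) powr (1/(a-2)) = exp (1/(a-2) * ln ((a-2)*V))"
      using elim V by (simp add: powr_def)
    also have "\<dots> = exp (ln (a-2)/(a-2) + ln V/(a-2))"
      using elim V by (simp add: ln_mult add_divide_distrib)
    finally show ?case by simp
  qed
  show ?thesis using Lim_transform_eventually[OF L ev] .
qed

lemma pw_lim':
  fixes V :: real assumes V: "V > 0"
  shows "((\<lambda>a. ((a-2)*V) powr (1/(2-a))) \<longlongrightarrow> 1) at_top"
proof -
  have L: "((\<lambda>a. inverse (((a-2)*V) powr (1/(a-2)))) \<longlongrightarrow> inverse 1) at_top"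
    by (intro tendsto_inverse pw_lim V) simp
  have ev: "eventually (\<lambda>a. inverse (((a-2)*V) powr (1/(a-2))) = ((a-2)*V) powr (1/(2-a))) at_top"
    using eventually_gt_at_top[of 2]
  proof eventually_elim
    case (elim a)
    have "1/(2-a) = - (1/(a-2))" by (metis minus_diff_eq minus_divide_right)
    then show ?case by (simp add: powr_minus)
  qed
  show ?thesis using Lim_transform_eventually[OF L ev] by simp
qed

context upsetup begin

lemma case1:
  assumes tail: "f \<sim>[at_top] (\<lambda>x. C * x powr (- \<eta>))" and C: "C > 0" and eta: "1 < \<eta>"
    and a2: "2 < \<alpha>" and ac: "\<alpha> < 2 + 1/(\<eta>-1)"
  shows "\<not> bounded {u. Up \<alpha> xi f u \<noteq> 0} \<and>
         (\<exists>K1>0. Up \<alpha> xi f \<sim>[at_bot] (\<lambda>u. \<bar>K1 * u\<bar> powr (1 / (\<eta> * (\<alpha> - 2) + 1 - \<alpha>))))"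
proof -
  have a: "\<alpha> \<noteq> 2" using a2 by simp
  define \<delta> where "\<delta> = 1/(\<alpha>-2)"
  have \<delta>: "\<delta> > 0" using a2 by (simp add: \<delta>_def)
  have "\<alpha> - 2 < 1/(\<eta>-1)" using ac by simp
  then have m1: "(\<alpha>-2)*(\<eta>-1) < 1" using eta by (simp add: less_divide_eq)
  have b: "1/(\<alpha>-2) - \<eta> > -1"
  proof -
    have "\<eta> - 1 < 1/(\<alpha>-2)" using m1 a2 by (simp add: less_divide_eq mult.commute)
    then show ?thesis by simp
  qed
  define c where "c = C * \<bar>\<alpha> - 2\<bar> powr (1/(\<alpha>-2))"
  define p where "p = 1/(\<alpha>-2) - \<eta> + 1"
  have c: "c > 0" using C a by (simp add: c_def)
  have p: "p > 0" using b by (simp add: p_def)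
  define k where "k = c/p"
  have k: "k > 0" using c p by (simp add: k_def)
  have rat: "((\<lambda>x. G \<alpha> x / (k * x powr p)) \<longlongrightarrow> 1) at_top"
    using G_case_pos[OF a tail C b] by (simp add: c_def p_def k_def)
  have top: "filterlim (G \<alpha>) at_top at_top"
    by (rule ratio_top[OF rat powr_at_top[OF k p]])
  have sub: "{..0} \<subseteq> {u. Up \<alpha> xi f u \<noteq> 0}"
    using range_all[OF a top] Up_nz_iff[OF a] by auto
  have nb: "\<not> bounded {u. Up \<alpha> xi f u \<noteq> 0}"
  proof
    assume "bounded {u. Up \<alpha> xi f u \<noteq> 0}"
    then have "bounded {..0::real}" using sub bounded_subset by blast
    then obtain B where B: "\<And>x::real. x \<in> {..0} \<Longrightarrow> norm x \<le> B" by (auto simp: bounded_iff)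
    have "norm (- \<bar>B\<bar> - 1) \<le> B" by (rule B) simp
    moreover have "norm (- \<bar>B\<bar> - 1) = \<bar>B\<bar> + 1" by simp
    ultimately show False by linarith
  qed
  define e where "e = 1 / (\<eta> * (\<alpha> - 2) + 1 - \<alpha>)"
  have Dn: "\<eta> * (\<alpha> - 2) + 1 - \<alpha> < 0" using m1 by (simp add: algebra_simps)
  have e: "e < 0" using Dn by (simp add: e_def)
  have pe: "p * e = - \<delta>"
  proof -
    have "p = (1 - (\<alpha>-2)*(\<eta>-1)) / (\<alpha>-2)" using a by (simp add: p_def field_simps)
    moreover have "\<eta> * (\<alpha> - 2) + 1 - \<alpha> = - (1 - (\<alpha>-2)*(\<eta>-1))" by (simp add: algebra_simps)
    ultimately show ?thesis using m1 a by (simp add: e_def \<delta>_def field_simps)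
  qed
  define M0 where "M0 = (\<alpha>-2) powr (-\<delta>) * k powr (-e)"
  have M0: "M0 > 0" using a2 k by (simp add: M0_def)
  define K1 where "K1 = M0 powr (1/e)"
  have K1: "K1 > 0" using M0 by (simp add: K1_def)
  have A: "G \<alpha> \<sim>[at_top] (\<lambda>x. k * x powr p)" by (rule asymp_equivI'[OF rat])
  have B: "(\<lambda>u. G \<alpha> (Xi \<alpha> u)) \<sim>[at_bot] (\<lambda>u. k * Xi \<alpha> u powr p)"
    by (rule asymp_equiv_compose'[OF A Xi_lim[OF a top]])
  have evn: "eventually (\<lambda>u::real. u < 0) at_bot"
    by (auto simp: eventually_at_bot_linorder intro!: exI[of _ "-1"])
  have Cc: "(\<lambda>u. -u) \<sim>[at_bot] (\<lambda>u. k * Xi \<alpha> u powr p)"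
  proof (rule asymp_equiv_transfer[OF B])
    show "eventually (\<lambda>u. G \<alpha> (Xi \<alpha> u) = -u) at_bot"
      using evn by eventually_elim (use Xi_props[OF a top] in auto)
  qed simp
  have D: "(\<lambda>u. (-u) powr e) \<sim>[at_bot] (\<lambda>u. (k * Xi \<alpha> u powr p) powr e)"
    by (rule asymp_equiv_powr_real[OF Cc])
       (use evn k in \<open>auto elim!: eventually_mono\<close>)
  have E: "(\<lambda>u. M0 * (-u) powr e) \<sim>[at_bot] (\<lambda>u. M0 * (k * Xi \<alpha> u powr p) powr e)"
    by (rule asymp_equiv_mult[OF asymp_equiv_refl D])
  have F: "(\<lambda>u. \<bar>K1 * u\<bar> powr e) \<sim>[at_bot] Up \<alpha> xi f"
  proof (rule asymp_equiv_transfer[OF E])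
    show "eventually (\<lambda>u. M0 * (-u) powr e = \<bar>K1 * u\<bar> powr e) at_bot"
      using evn
    proof eventually_elim
      case (elim u)
      have "\<bar>K1 * u\<bar> = K1 * (-u)" using elim K1 by (simp add: abs_mult)
      moreover have "(K1 * (-u)) powr e = K1 powr e * (-u) powr e"
        using elim K1 by (intro powr_mult)
      ultimately have "\<bar>K1 * u\<bar> powr e = K1 powr e * (-u) powr e" by simp
      also have "K1 powr e = M0" using M0 e by (simp add: K1_def powr_powr)
      finally show ?case by simp
    qed
    show "eventually (\<lambda>u. M0 * (k * Xi \<alpha> u powr p) powr e = Up \<alpha> xi f u) at_bot"
      using evn
    proof eventually_elim
      case (elim u)
      define x where "x = Xi \<alpha> u"
      have x: "xi \<le> x" "G \<alpha> x = -u" using Xi_props[OF a top] elim by (auto simp: x_def)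
      have xp: "x > 0" using x xi_pos by simp
      have "Up \<alpha> xi f u = Up \<alpha> xi f (- G \<alpha> x)" using x by simp
      also have "\<dots> = \<bar>(\<alpha> - 2) * x\<bar> powr (1 / (2 - \<alpha>))" by (rule Up_G[OF a x(1)])
      also have "\<dots> = ((\<alpha> - 2) * x) powr (-\<delta>)"
      proof -
        have "1 / (2 - \<alpha>) = - \<delta>" unfolding \<delta>_def by (metis minus_diff_eq minus_divide_right)
        moreover have "\<bar>(\<alpha> - 2) * x\<bar> = (\<alpha> - 2) * x" using a2 xp by simp
        ultimately show ?thesis by simp
      qed
      also have "\<dots> = (\<alpha> - 2) powr (-\<delta>) * x powr (-\<delta>)"
        using a2 xp by (simp add: powr_mult)
      finally have U: "Up \<alpha> xi f u = (\<alpha> - 2) powr (-\<delta>) * x powr (-\<delta>)" .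
      have "(k * x powr p) powr e = k powr e * x powr (-\<delta>)"
        using k xp pe by (simp add: powr_mult powr_powr)
      then have "M0 * (k * x powr p) powr e = (\<alpha>-2) powr (-\<delta>) * (k powr (-e) * k powr e) * x powr (-\<delta>)"
        by (simp add: M0_def)
      also have "k powr (-e) * k powr e = 1" using k by (simp add: powr_add[symmetric])
      finally show ?case using U by (simp add: x_def)
    qed
  qed
  have "Up \<alpha> xi f \<sim>[at_bot] (\<lambda>u. \<bar>K1 * u\<bar> powr (1 / (\<eta> * (\<alpha> - 2) + 1 - \<alpha>)))"
    using asymp_equiv_symI[OF F] by (simp add: e_def)
  then show ?thesis using nb K1 by blast
qed

end



context upsetup begin

lemma case2:
  assumes tail: "f \<sim>[at_top] (\<lambda>x. C * x powr (- \<eta>))" and C: "C > 0" and eta: "1 < \<eta>"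
  shows "\<exists>r>0. ((\<lambda>u. ln (Up (2 + 1 / (\<eta> - 1)) xi f u) / u) \<longlongrightarrow> r) at_bot"
proof -
  define \<alpha> where "\<alpha> = 2 + 1 / (\<eta> - 1)"
  have a2: "\<alpha> > 2" using eta by (simp add: \<alpha>_def)
  have a: "\<alpha> \<noteq> 2" using a2 by simp
  have d: "1/(\<alpha>-2) = \<eta> - 1" by (simp add: \<alpha>_def)
  have b: "1/(\<alpha>-2) - \<eta> = -1" using d by simp
  define c where "c = C * \<bar>\<alpha> - 2\<bar> powr (1/(\<alpha>-2))"
  have c: "c > 0" using C a by (simp add: c_def)
  have rat: "((\<lambda>x. G \<alpha> x / (c * ln x)) \<longlongrightarrow> 1) at_top"
    using G_case_zero[OF a tail C b] by (simp add: c_def)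
  have top: "filterlim (G \<alpha>) at_top at_top"
    by (rule ratio_top[OF rat filterlim_tendsto_pos_mult_at_top[OF tendsto_const c ln_at_top]])
  define Q where "Q x = (\<eta>-1) * (ln (\<alpha>-2) + ln x) / G \<alpha> x" for x
  have Qlim: "(Q \<longlongrightarrow> (\<eta>-1)/c) at_top"
  proof -
    have l1: "((\<lambda>x. (\<eta>-1)/c * (1 / (G \<alpha> x / (c * ln x))) * (1 + ln (\<alpha>-2) / ln x))
               \<longlongrightarrow> (\<eta>-1)/c * (1/1) * (1 + 0)) at_top"
      by (intro tendsto_intros rat tendsto_divide_0[OF tendsto_const]
            filterlim_at_top_imp_at_infinity[OF ln_at_top]) simp
    have ev: "eventually (\<lambda>x. (\<eta>-1)/c * (1 / (G \<alpha> x / (c * ln x))) * (1 + ln (\<alpha>-2) / ln x) = Q x) at_top"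
      using eventually_gt_at_top[of "max 1 xi"]
    proof eventually_elim
      case (elim x)
      have lx: "ln x > 0" using elim by simp
      have Gx: "G \<alpha> x > 0" using G_strict[OF a, of xi x] elim by (simp add: G_xi)
      show ?case using lx Gx c by (simp add: Q_def field_simps)
    qed
    show ?thesis using Lim_transform_eventually[OF l1 ev] by simp
  qed
  have comp: "((\<lambda>u. Q (Xi \<alpha> u)) \<longlongrightarrow> (\<eta>-1)/c) at_bot"
    using filterlim_compose[OF Qlim Xi_lim[OF a top]] by simp
  have evn: "eventually (\<lambda>u::real. u < 0) at_bot"
    by (auto simp: eventually_at_bot_linorder intro!: exI[of _ "-1"])
  have ev: "eventually (\<lambda>u. Q (Xi \<alpha> u) = ln (Up \<alpha> xi f u) / u) at_bot"
    using evn
  proof eventually_elim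
    case (elim u)
    define x where "x = Xi \<alpha> u"
    have x: "xi \<le> x" "G \<alpha> x = -u" using Xi_props[OF a top] elim by (auto simp: x_def)
    have xp: "x > 0" using x xi_pos by simp
    have "Up \<alpha> xi f u = Up \<alpha> xi f (- G \<alpha> x)" using x by simp
    also have "\<dots> = \<bar>(\<alpha> - 2) * x\<bar> powr (1 / (2 - \<alpha>))" by (rule Up_G[OF a x(1)])
    also have "\<dots> = ((\<alpha> - 2) * x) powr (- (\<eta> - 1))"
    proof -
      have "1 / (2 - \<alpha>) = - (\<eta> - 1)" using d by (metis minus_diff_eq minus_divide_right)
      moreover have "\<bar>(\<alpha> - 2) * x\<bar> = (\<alpha> - 2) * x" using a2 xp by simp
      ultimately show ?thesis by simp
    qed
    finally have U: "Up \<alpha> xi f u = ((\<alpha> - 2) * x) powr (- (\<eta> - 1))" .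
    have lnU: "ln (Up \<alpha> xi f u) = - ((\<eta> - 1) * (ln (\<alpha> - 2) + ln x))"
    proof -
      have l1: "ln (Up \<alpha> xi f u) = (- (\<eta> - 1)) * ln ((\<alpha> - 2) * x)"
        by (subst U, rule ln_powr)
      have l2: "ln ((\<alpha> - 2) * x) = ln (\<alpha> - 2) + ln x" using a2 xp by (simp add: ln_mult)
      show ?thesis unfolding l1 l2 by (simp add: algebra_simps)
    qed
    have "Q (Xi \<alpha> u) = (\<eta> - 1) * (ln (\<alpha> - 2) + ln x) / (-u)"
      using x by (simp add: Q_def x_def[symmetric])
    also have "\<dots> = - ((\<eta> - 1) * (ln (\<alpha> - 2) + ln x)) / u"
      by (simp add: divide_minus_right)
    finally show ?case using lnU by simp
  qed
  have "((\<lambda>u. ln (Up \<alpha> xi f u) / u) \<longlongrightarrow> (\<eta>-1)/c) at_bot"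
    using Lim_transform_eventually[OF comp ev] .
  moreover have "(\<eta>-1)/c > 0" using eta c by simp
  ultimately show ?thesis unfolding \<alpha>_def by blast
qed

lemma case3:
  assumes tail: "f \<sim>[at_top] (\<lambda>x. C * x powr (- \<eta>))" and C: "C > 0" and eta: "1 < \<eta>"
    and al: "\<alpha> < 2 \<or> 2 + 1/(\<eta>-1) < \<alpha>"
  shows "compact (closure {u. Up \<alpha> xi f u \<noteq> 0})"
proof -
  have a: "\<alpha> \<noteq> 2" using al eta by (auto simp: add_pos_pos) 
  have b: "1/(\<alpha>-2) - \<eta> < -1"
  proof (cases "\<alpha> < 2")
    case True
    then have "1/(\<alpha>-2) < 0" by simp
    then show ?thesis using eta by linarith
  next
    case False
    then have h: "1/(\<eta>-1) < \<alpha> - 2" using al by simp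
    have p: "\<alpha> - 2 > 0" using h eta by (smt (verit) divide_pos_pos)
    have "1 < (\<alpha> - 2) * (\<eta> - 1)" using h eta by (simp add: divide_less_eq)
    then have "1/(\<alpha>-2) < \<eta> - 1" using p by (simp add: divide_less_eq mult.commute)
    then show ?thesis by simp
  qed
  obtain B where B: "\<And>x. x \<ge> xi \<Longrightarrow> G \<alpha> x \<le> B" using G_case_neg[OF a tail C b] by blast
  have "{u. Up \<alpha> xi f u \<noteq> 0} \<subseteq> {-B..0}"
  proof
    fix u assume "u \<in> {u. Up \<alpha> xi f u \<noteq> 0}"
    then obtain x where "x \<ge> xi" "u = - G \<alpha> x" using Up_nz_iff[OF a] by auto
    then show "u \<in> {-B..0}" using B G_nonneg[OF a] by auto
  qed
  then have "bounded {u. Up \<alpha> xi f u \<noteq> 0}" by (rule bounded_subset[rotated]) simp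
  then show ?thesis by simp
qed

end



context upsetup begin

lemma F_lim:
  assumes f1: "(f has_integral 1) {xi..}"
  shows "((\<lambda>x. integral {xi..x} f) \<longlongrightarrow> 1) at_top"
proof -
  have si: "set_integrable lebesgue {xi..} f"
    using nonnegative_absolutely_integrable_1[OF f_int] f_pos by (auto simp: less_imp_le)
  have L: "((\<lambda>b. set_lebesgue_integral lebesgue {xi..b} f) \<longlongrightarrow> set_lebesgue_integral lebesgue {xi..} f) at_top"
    by (rule tendsto_set_lebesgue_integral_at_top[OF _ si]) auto
  have e1: "set_lebesgue_integral lebesgue {xi..} f = 1"
    using set_lebesgue_integral_eq_integral(2)[OF si] f1 integral_unique by auto
  have e2: "set_lebesgue_integral lebesgue {xi..b} f = integral {xi..b} f" for b
    using set_lebesgue_integral_eq_integral(2)[OF f_abs[of b]] by simp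
  show ?thesis using L unfolding e1 e2 .
qed

lemma F_le1:
  assumes f1: "(f has_integral 1) {xi..}"
  shows "integral {xi..x} f \<le> 1"
proof -
  have "integral {xi..x} f \<le> integral {xi..} f"
    using f_int_ivl f_int f_pos by (intro integral_subset_le) (auto simp: less_imp_le)
  then show ?thesis using integral_unique[OF f1] by simp
qed

lemma G_unif_bound:
  assumes tail: "f \<sim>[at_top] (\<lambda>x. C * x powr (- \<eta>))" and C: "C > 0" and eta: "1 < \<eta>"
    and f1: "(f has_integral 1) {xi..}" and eps: "\<epsilon> > 0"
  shows "\<exists>V>0. eventually (\<lambda>\<alpha>. \<alpha> > 2 \<and> (\<forall>x\<ge>xi. G \<alpha> x \<le>
            ((\<alpha>-2)*V) powr (1/(\<alpha>-2)) + ((\<alpha>-2)*1) powr (1/(\<alpha>-2)) * \<epsilon>)) at_top"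
proof -
  define s where "s = (\<eta> - 1) / 2"
  have s: "s > 0" "s + 1 - \<eta> < 0" unfolding s_def using eta by (simp_all add: field_simps)
  have rat: "((\<lambda>v. f v / (C * v powr (- \<eta>))) \<longlongrightarrow> 1) at_top"
    by (rule asymp_equivD_strong[OF tail])
       (use C in \<open>auto simp: eventually_at_top_linorder intro!: exI[of _ 1]\<close>)
  have "eventually (\<lambda>v. f v / (C * v powr (- \<eta>)) < 2 \<and> v > 0) at_top"
    using order_tendstoD(2)[OF rat, of 2] eventually_gt_at_top[of 0] by (auto elim: eventually_conj)
  then have "eventually (\<lambda>v. f v \<le> 2 * C * v powr (- \<eta>)) at_top"
  proof eventually_elim
    case (elim v)
    then have "C * v powr (- \<eta>) > 0" using C by simp
    then show ?case using elim by (simp add: divide_less_eq mult.assoc)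
  qed
  then obtain V0 where V0: "\<And>v. v \<ge> V0 \<Longrightarrow> f v \<le> 2 * C * v powr (- \<eta>)"
    by (auto simp: eventually_at_top_linorder)
  define T where "T V = 2 * C / (\<eta> - 1 - s) * V powr (s + 1 - \<eta>)" for V
  have Tlim: "(T \<longlongrightarrow> 0) at_top"
    unfolding T_def by (intro tendsto_mult_right_zero tendsto_neg_powr s filterlim_ident)
  have "eventually (\<lambda>V. T V < \<epsilon> \<and> V \<ge> max V0 (max xi 1)) at_top"
    using order_tendstoD(2)[OF Tlim eps] eventually_ge_at_top[of "max V0 (max xi 1)"] by (rule eventually_conj)
  then obtain V where VT: "T V < \<epsilon>" and V: "V \<ge> V0" "V \<ge> xi" "V \<ge> 1"
    by (auto simp: eventually_at_top_linorder)
  have Vp: "V > 0" using V by simp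
  have ev: "eventually (\<lambda>\<alpha>. \<alpha> > 2 \<and> (\<forall>x\<ge>xi. G \<alpha> x \<le>
            ((\<alpha>-2)*V) powr (1/(\<alpha>-2)) + ((\<alpha>-2)*1) powr (1/(\<alpha>-2)) * \<epsilon>)) at_top"
    using eventually_ge_at_top[of "max 3 (2 + 1/s)"]
  proof eventually_elim
    case (elim \<alpha>)
    have a2: "\<alpha> > 2" and a: "\<alpha> \<noteq> 2" using elim by auto
    define \<delta> where "\<delta> = 1/(\<alpha>-2)"
    have d0: "\<delta> > 0" using a2 by (simp add: \<delta>_def)
    have ds: "\<delta> \<le> s"
    proof -
      have "1/s \<le> \<alpha> - 2" using elim by simp
      then have "1 \<le> (\<alpha> - 2) * s" using s by (simp add: divide_le_eq)
      then show ?thesis using a2 by (simp add: \<delta>_def divide_le_eq mult.commute)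
    qed
    have key: "G \<alpha> y \<le> ((\<alpha>-2)*V) powr \<delta> + (\<alpha>-2) powr \<delta> * \<epsilon>" if y: "y \<ge> V" for y
    proof -
      have split: "G \<alpha> y = integral {xi..V} (\<lambda>v. wt \<alpha> v * f v) + integral {V..y} (\<lambda>v. wt \<alpha> v * f v)"
        unfolding G_def using V y
        by (intro Henstock_Kurzweil_Integration.integral_combine[symmetric] g_int a) auto
      have I1: "integral {xi..V} (\<lambda>v. wt \<alpha> v * f v) \<le> ((\<alpha>-2)*V) powr \<delta>"
      proof -
        have "integral {xi..V} (\<lambda>v. wt \<alpha> v * f v) \<le> integral {xi..V} (\<lambda>v. ((\<alpha>-2)*V) powr \<delta> * f v)"
        proof (rule integral_le[OF g_int[OF a]])
          show "(\<lambda>v. ((\<alpha>-2)*V) powr \<delta> * f v) integrable_on {xi..V}"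
            using integrable_on_cmult_left[OF f_int_ivl, of "((\<alpha>-2)*V) powr \<delta>" V] by simp
          fix v assume v: "v \<in> {xi..V}"
          then have "wt \<alpha> v \<le> ((\<alpha>-2)*V) powr \<delta>"
            using a2 xi_pos d0 by (auto simp: wt_def \<delta>_def intro!: powr_mono2)
          then show "wt \<alpha> v * f v \<le> ((\<alpha>-2)*V) powr \<delta> * f v"
            using f_pos[of v] v by (intro mult_right_mono) auto
        qed
        also have "\<dots> = ((\<alpha>-2)*V) powr \<delta> * integral {xi..V} f" by simp
        also have "\<dots> \<le> ((\<alpha>-2)*V) powr \<delta> * 1"
          using F_le1[OF f1] by (intro mult_left_mono) auto
        finally show ?thesis by simp
      qed
      define cc where "cc = 2 * C * (\<alpha>-2) powr \<delta>"
      have hint: "((\<lambda>v. cc * v powr (s - \<eta>)) has_integral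
               (cc/(s-\<eta>+1) * y powr (s-\<eta>+1) - cc/(s-\<eta>+1) * V powr (s-\<eta>+1))) {V..y}"
        using powr_antideriv[of "s - \<eta>" V y cc] s Vp y by simp
      have I2: "integral {V..y} (\<lambda>v. wt \<alpha> v * f v) \<le> (\<alpha>-2) powr \<delta> * \<epsilon>"
      proof -
        have "integral {V..y} (\<lambda>v. wt \<alpha> v * f v) \<le> integral {V..y} (\<lambda>v. cc * v powr (s - \<eta>))"
        proof (rule integral_le)
          show "(\<lambda>v. wt \<alpha> v * f v) integrable_on {V..y}"
            using V y by (intro integrable_on_subinterval[OF g_int[OF a, of y]]) auto
          show "(\<lambda>v. cc * v powr (s - \<eta>)) integrable_on {V..y}" using hint by blast
          fix v assume v: "v \<in> {V..y}"
          then have v1: "v \<ge> 1" "v \<ge> V0" "v > 0" "v \<ge> xi" using V by auto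
          have "wt \<alpha> v = (\<alpha>-2) powr \<delta> * v powr \<delta>"
            using a2 v1 by (simp add: wt_def \<delta>_def abs_mult powr_mult)
          also have "\<dots> \<le> (\<alpha>-2) powr \<delta> * v powr s"
            using powr_mono[OF ds v1(1)] by (intro mult_left_mono) auto
          finally have w: "wt \<alpha> v \<le> (\<alpha>-2) powr \<delta> * v powr s" .
          have "wt \<alpha> v * f v \<le> ((\<alpha>-2) powr \<delta> * v powr s) * (2 * C * v powr (- \<eta>))"
            using w V0[OF v1(2)] f_pos[OF v1(4)] wt_pos[OF a v1(3)] by (intro mult_mono) auto
          also have "\<dots> = cc * (v powr s * v powr (- \<eta>))" by (simp add: cc_def)
          also have "v powr s * v powr (- \<eta>) = v powr (s - \<eta>)" by (simp add: powr_add[symmetric])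
          finally show "wt \<alpha> v * f v \<le> cc * v powr (s - \<eta>)" .
        qed
        also have "\<dots> = cc/(s-\<eta>+1) * y powr (s-\<eta>+1) - cc/(s-\<eta>+1) * V powr (s-\<eta>+1)"
          using integral_unique[OF hint] .
        also have "\<dots> \<le> - (cc/(s-\<eta>+1) * V powr (s-\<eta>+1))"
        proof -
          have "cc > 0" using C a2 by (simp add: cc_def)
          then have "cc/(s-\<eta>+1) * y powr (s-\<eta>+1) \<le> 0"
            using s by (intro mult_nonpos_nonneg) (auto simp: divide_pos_neg less_imp_le)
          then show ?thesis by simp
        qed
        also have "\<dots> = (\<alpha>-2) powr \<delta> * T V"
          using s by (simp add: T_def cc_def field_simps)
        also have "\<dots> \<le> (\<alpha>-2) powr \<delta> * \<epsilon>"
          using VT by (intro mult_left_mono) auto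
        finally show ?thesis .
      qed
      show ?thesis using split I1 I2 by simp
    qed
    have "G \<alpha> x \<le> ((\<alpha>-2)*V) powr \<delta> + (\<alpha>-2) powr \<delta> * \<epsilon>" if x: "x \<ge> xi" for x
    proof -
      have "G \<alpha> x \<le> G \<alpha> (max x V)" using G_mono[OF a x] by simp
      also have "\<dots> \<le> ((\<alpha>-2)*V) powr \<delta> + (\<alpha>-2) powr \<delta> * \<epsilon>" by (rule key) simp
      finally show ?thesis .
    qed
    then show ?case using a2 by (simp add: \<delta>_def)
  qed
  then show ?thesis using Vp by blast
qed

end



context upsetup begin

lemma case4:
  assumes tail: "f \<sim>[at_top] (\<lambda>x. C * x powr (- \<eta>))" and C: "C > 0" and eta: "1 < \<eta>"
    and f1: "(f has_integral 1) {xi..}" and u: "u \<noteq> -1"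
  shows "((\<lambda>\<alpha>. Up \<alpha> xi f u) \<longlongrightarrow> indicator {-1..0} u) at_top"
proof -
  consider "u > 0" | "u = 0" | "-1 < u \<and> u < 0" | "u < -1" using u by linarith
  then show ?thesis
  proof cases
    case 1
    have "eventually (\<lambda>\<alpha>. Up \<alpha> xi f u = 0) at_top"
      using eventually_gt_at_top[of 2]
    proof eventually_elim
      case (elim \<alpha>)
      show ?case
      proof (rule Up_out)
        show "\<not> (\<exists>x\<ge>xi. u = - G \<alpha> x)" using G_nonneg[of \<alpha>] elim 1 by force
      qed
    qed
    then show ?thesis using 1 by (simp add: tendsto_eventually)
  next
    case 2
    have ev: "eventually (\<lambda>\<alpha>. ((\<alpha>-2)*xi) powr (1/(2-\<alpha>)) = Up \<alpha> xi f u) at_top"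
      using eventually_gt_at_top[of 2]
    proof eventually_elim
      case (elim \<alpha>)
      have "Up \<alpha> xi f u = Up \<alpha> xi f (- G \<alpha> xi)" using 2 by (simp add: G_xi)
      also have "\<dots> = \<bar>(\<alpha>-2)*xi\<bar> powr (1/(2-\<alpha>))" using Up_G elim by simp
      finally show ?case using elim xi_pos by simp
    qed
    show ?thesis using Lim_transform_eventually[OF pw_lim'[OF xi_pos] ev] 2 by simp
  next
    case 3
    have "eventually (\<lambda>x. integral {xi..x} f > -u \<and> x \<ge> xi) at_top"
      using order_tendstoD(1)[OF F_lim[OF f1], of "-u"] 3 eventually_ge_at_top[of xi]
      by (auto intro: eventually_conj)
    then obtain X where X: "X \<ge> xi" "integral {xi..X} f > -u"
      by (auto simp: eventually_at_top_linorder)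
    have Xp: "X > 0" using X xi_pos by simp
    have ev: "eventually (\<lambda>\<alpha>. ((\<alpha>-2)*X) powr (1/(2-\<alpha>)) \<le> Up \<alpha> xi f u \<and>
                               Up \<alpha> xi f u \<le> ((\<alpha>-2)*xi) powr (1/(2-\<alpha>))) at_top"
      using eventually_ge_at_top[of "max 3 (2 + 1/xi)"]
    proof eventually_elim
      case (elim \<alpha>)
      have a2: "\<alpha> > 2" and a: "\<alpha> \<noteq> 2" using elim by auto
      have w1: "wt \<alpha> v \<ge> 1" if v: "v \<ge> xi" for v
      proof -
        have "1/xi \<le> \<alpha> - 2" using elim by simp
        then have "1 \<le> (\<alpha> - 2) * xi" using xi_pos by (simp add: divide_le_eq)
        also have "\<dots> \<le> (\<alpha> - 2) * v" using v a2 by simp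
        finally have "1 \<le> \<bar>(\<alpha> - 2) * v\<bar>" by simp
        then show ?thesis unfolding wt_def using a2 by (intro ge_one_powr_ge_zero) auto
      qed
      have "integral {xi..X} f \<le> G \<alpha> X" unfolding G_def
      proof (rule integral_le[OF f_int_ivl g_int[OF a]])
        fix v assume "v \<in> {xi..X}"
        then show "f v \<le> wt \<alpha> v * f v" using w1[of v] f_pos[of v]
          by (simp add: mult_le_cancel_right1 less_imp_le)
      qed
      then obtain x where x: "xi \<le> x" "x \<le> X" "G \<alpha> x = -u"
        using G_IVT[OF a, of "-u" X] X 3 by auto
      have xp: "x > 0" using x xi_pos by simp
      have "Up \<alpha> xi f u = Up \<alpha> xi f (- G \<alpha> x)" using x by simp
      also have "\<dots> = ((\<alpha>-2)*x) powr (1/(2-\<alpha>))" using Up_G[OF a x(1)] a2 xp by simp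
      finally have U: "Up \<alpha> xi f u = ((\<alpha>-2)*x) powr (1/(2-\<alpha>))" .
      have ex: "1/(2-\<alpha>) \<le> 0" using a2 by simp
      show ?case unfolding U using a2 xi_pos x
        by (intro conjI powr_mono2'[OF ex]) auto
    qed
    have "((\<lambda>\<alpha>. Up \<alpha> xi f u) \<longlongrightarrow> 1) at_top"
      by (rule tendsto_sandwich[OF _ _ pw_lim'[OF Xp] pw_lim'[OF xi_pos]])
         (use ev in \<open>auto elim: eventually_mono\<close>)
    then show ?thesis using 3 by simp
  next
    case 4
    define \<epsilon> where "\<epsilon> = (-u - 1)/2"
    have eps: "\<epsilon> > 0" using 4 by (simp add: \<epsilon>_def)
    obtain V where Vp: "V > 0" and evB: "eventually (\<lambda>\<alpha>. \<alpha> > 2 \<and> (\<forall>x\<ge>xi. G \<alpha> x \<le>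
            ((\<alpha>-2)*V) powr (1/(\<alpha>-2)) + ((\<alpha>-2)*1) powr (1/(\<alpha>-2)) * \<epsilon>)) at_top"
      using G_unif_bound[OF tail C eta f1 eps] by blast
    have lim: "((\<lambda>\<alpha>. ((\<alpha>-2)*V) powr (1/(\<alpha>-2)) + ((\<alpha>-2)*1) powr (1/(\<alpha>-2)) * \<epsilon>) \<longlongrightarrow> 1 + 1 * \<epsilon>) at_top"
      by (intro tendsto_intros pw_lim Vp) simp
    have "1 + 1 * \<epsilon> < -u" using 4 by (simp add: \<epsilon>_def field_simps)
    then have evL: "eventually (\<lambda>\<alpha>. ((\<alpha>-2)*V) powr (1/(\<alpha>-2)) + ((\<alpha>-2)*1) powr (1/(\<alpha>-2)) * \<epsilon> < -u) at_top"
      by (rule order_tendstoD(2)[OF lim])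
    have "eventually (\<lambda>\<alpha>. Up \<alpha> xi f u = 0) at_top"
      using evB evL
    proof eventually_elim
      case (elim \<alpha>)
      show ?case
      proof (rule Up_out)
        show "\<not> (\<exists>x\<ge>xi. u = - G \<alpha> x)"
        proof
          assume "\<exists>x\<ge>xi. u = - G \<alpha> x"
          then obtain x where "x \<ge> xi" "u = - G \<alpha> x" by blast
          then show False using elim by force
        qed
      qed
    qed
    then show ?thesis using 4 by (simp add: tendsto_eventually)
  qed
qed

end


theorem proposition5:
  fixes f :: "real \<Rightarrow> real" and xi C \<eta> :: real
  assumes xi_pos: "0 < xi"
    and f_pos: "\<And>x. xi \<le> x \<Longrightarrow> 0 < f x"
    and f_density: "(f has_integral 1) {xi..}"
    and eta: "1 < \<eta>" and C: "0 < C"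
    and tail: "f \<sim>[at_top] (\<lambda>x. C * x powr (- \<eta>))"
  defines "\<alpha>c \<equiv> 2 + 1 / (\<eta> - 1)"
  shows "(\<forall>\<alpha>. 2 < \<alpha> \<and> \<alpha> < \<alpha>c \<longrightarrow>
            \<not> bounded {u. Up \<alpha> xi f u \<noteq> 0} \<and>
            (\<exists>K1>0. Up \<alpha> xi f \<sim>[at_bot]
                (\<lambda>u. \<bar>K1 * u\<bar> powr (1 / (\<eta> * (\<alpha> - 2) + 1 - \<alpha>)))))
       \<and> (\<exists>r>0. ((\<lambda>u. ln (Up \<alpha>c xi f u) / u) \<longlongrightarrow> r) at_bot)
       \<and> (\<forall>\<alpha>. \<alpha> < 2 \<or> \<alpha>c < \<alpha> \<longrightarrow> compact (closure {u. Up \<alpha> xi f u \<noteq> 0}))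
       \<and> (\<forall>u. u \<noteq> -1 \<longrightarrow>
            ((\<lambda>\<alpha>. Up \<alpha> xi f u) \<longlongrightarrow> indicator {-1..0} u) at_top)"
  proof -
  interpret upsetup f xi
    by unfold_locales (use xi_pos f_pos f_density in auto)
  show ?thesis unfolding \<alpha>c_def
    using case1[OF tail C eta] case2[OF tail C eta] case3[OF tail C eta]
      case4[OF tail C eta f_density] by blast
qed

end
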